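(* Let $l:\mathcal{Y}\times\mathbb{R}\to\mathbb{R}$ be differentiable in its second argument with $|\partial_2 l(y,s)|\le\Lambda$ for all $y\in\mathcal{Y}$, $s\in\mathbb{R}$. Let $(y,z)$ and $(y',z')$ be independent, identically distributed random pairs with values in $\mathcal{Y}\times\mathbb{R}^n$ and $\mathbb{E}\|z\|^2<\infty$, and let $x,x'\in\mathbb{R}^n$ be (possibly random) vectors independent of $(y,z),(y',z')$. Then $$\mathbb{E}_{y,z,y',z'}\Big[\big\langle \nabla_x l(y,\langle z,x\rangle),\,\nabla_x l(y',\langle z',x'\rangle)\big\rangle\Big]\le \Lambda^2\,\big\|\mathbb{E}_{z}[z z^\top]\big\|_{\mathrm{Frob}}=:L^2\alpha,$$ where $\nabla_x l(y,\langle z,x\rangle)=z\,\partial_2 l(y,\langle z,x\rangle)$ and $\|\cdot\|_{\mathrm{Frob}}$ is the Frobenius norm.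
   Context: $L>0$ is the bound on gradient norms of the losses, and the equality $L^2\alpha=\Lambda^2\|\mathbb{E}[zz^\top]\|_{\mathrm{Frob}}$ defines the correlation factor $\alpha$. *)

theory Defs
  imports "HOL-Probability.Probability"
begin

definition frobenius_norm :: "real^'n^'m \<Rightarrow> real" where
  "frobenius_norm A = sqrt (\<Sum>i\<in>UNIV. \<Sum>j\<in>UNIV. (A $ i $ j)^2)"

definition second_moment :: "'a measure \<Rightarrow> ('a \<Rightarrow> real^'n) \<Rightarrow> real^'n^'n" where
  "second_moment M Z = (\<chi> i j. integral\<^sup>L M (\<lambda>\<omega>. Z \<omega> $ i * Z \<omega> $ j))"

end

theory Submission
  imports Defs
begin

lemma frob_norm: "frobenius_norm (A::real^'n^'m) = norm A"
  unfolding frobenius_norm_def norm_vec_def L2_set_def real_norm_def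
  by (simp add: sum_nonneg)

lemma deriv_meas:
  fixes l :: "'y \<Rightarrow> real \<Rightarrow> real"
  assumes l_meas: "(\<lambda>(y, s). l y s) \<in> borel_measurable (MY \<Otimes>\<^sub>M borel)"
    and l_diff: "\<And>y s. l y differentiable (at s)"
  shows "(\<lambda>p. deriv (l (fst p)) (snd p)) \<in> borel_measurable (MY \<Otimes>\<^sub>M borel)"
proof (rule borel_measurable_LIMSEQ_real)
  fix p :: "'y \<times> real"
  have D: "DERIV (l (fst p)) (snd p) :> deriv (l (fst p)) (snd p)"
    using l_diff DERIV_deriv_iff_real_differentiable by blast
  hence "((\<lambda>h. (l (fst p) (snd p + h) - l (fst p) (snd p)) / h) \<longlongrightarrow> deriv (l (fst p)) (snd p)) (at 0)"
    unfolding DERIV_def .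
  moreover have "(\<lambda>n. inverse (real (Suc n))) \<longlonglongrightarrow> 0" by (rule LIMSEQ_inverse_real_of_nat)
  ultimately show "(\<lambda>n. (l (fst p) (snd p + inverse (real (Suc n))) - l (fst p) (snd p)) / inverse (real (Suc n)))
      \<longlonglongrightarrow> deriv (l (fst p)) (snd p)"
    unfolding tendsto_at_iff_sequentially by (auto simp: o_def)
next
  fix n :: nat
  have m: "(\<lambda>p. l (fst p) (snd p)) \<in> borel_measurable (MY \<Otimes>\<^sub>M borel)"
    using l_meas by (simp add: case_prod_beta')
  have "(\<lambda>p. l (fst p) (snd p + c)) \<in> borel_measurable (MY \<Otimes>\<^sub>M borel)" for c
    using measurable_compose[OF _ m, of "\<lambda>p. (fst p, snd p + c)"] by simp
  then show "(\<lambda>p. (l (fst p) (snd p + inverse (real (Suc n))) - l (fst p) (snd p)) / inverse (real (Suc n)))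
      \<in> borel_measurable (MY \<Otimes>\<^sub>M borel)"
    using m by measurable
qed

lemma norm_outer: "norm (\<chi> i j. (w::real^'n) $ i * w $ j) = (norm w)^2"
proof -
  have "norm (\<chi> i j. w $ i * w $ j) = sqrt (\<Sum>i\<in>UNIV. \<Sum>j\<in>UNIV. (w$i * w$j)^2)"
    using frob_norm[of "\<chi> i j. w $ i * w $ j"] by (simp add: frobenius_norm_def)
  also have "(\<Sum>i\<in>UNIV. \<Sum>j\<in>UNIV. (w$i * w$j)^2) = ((\<Sum>i\<in>UNIV. (w$i)^2))^2"
    by (simp add: power2_eq_square sum_product power_mult_distrib mult_ac)
  also have "sqrt \<dots> = (\<Sum>i\<in>UNIV. (w$i)^2)" by (simp add: sum_nonneg)
  also have "\<dots> = (norm w)^2" by (simp add: norm_vec_def L2_set_def sum_nonneg)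
  finally show ?thesis .
qed

lemma ubound:
  fixes M :: "'a measure" and MY :: "'y measure"
    and l :: "'y \<Rightarrow> real \<Rightarrow> real" and \<Lambda> :: real
    and Y :: "'a \<Rightarrow> 'y" and Z :: "'a \<Rightarrow> real^'n" and x :: "real^'n"
  assumes P: "prob_space M"
    and dm: "(\<lambda>p. deriv (l (fst p)) (snd p)) \<in> borel_measurable (MY \<Otimes>\<^sub>M borel)"
    and l_bound: "\<And>y s. \<bar>deriv (l y) s\<bar> \<le> \<Lambda>"
    and meas1: "(\<lambda>\<omega>. (Y \<omega>, Z \<omega>)) \<in> measurable M (MY \<Otimes>\<^sub>M borel)"
    and moment: "integrable M (\<lambda>\<omega>. (norm (Z \<omega>))^2)"
  shows "(norm (\<chi> i. integral\<^sup>L M (\<lambda>\<omega>. deriv (l (Y \<omega>)) (Z \<omega> \<bullet> x) * Z \<omega> $ i)))^2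
         \<le> \<Lambda>^2 * norm (second_moment M Z)"
proof -
  interpret prob_space M by (rule P)
  define a where "a \<omega> = deriv (l (Y \<omega>)) (Z \<omega> \<bullet> x)" for \<omega>
  define w where "w = (\<chi> i. integral\<^sup>L M (\<lambda>\<omega>. a \<omega> * Z \<omega> $ i))"
  define S where "S = second_moment M Z"
  have L0: "0 \<le> \<Lambda>" using l_bound[of undefined 0] by linarith
  have Ym: "Y \<in> measurable M MY" and Zm[measurable]: "Z \<in> borel_measurable M"
    using meas1 by (auto simp: measurable_pair_iff o_def)
  have Zi[measurable]: "(\<lambda>\<omega>. Z \<omega> $ i) \<in> borel_measurable M" for i
    by (rule borel_measurable_continuous_on[OF _ Zm]) (intro continuous_intros)
  have pm: "(\<lambda>\<omega>. (Y \<omega>, Z \<omega> \<bullet> x)) \<in> measurable M (MY \<Otimes>\<^sub>M borel)"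
    using Ym Zm by (intro measurable_Pair) auto
  have am[measurable]: "a \<in> borel_measurable M"
    using measurable_compose[OF pm dm] by (simp add: a_def[abs_def])
  have abnd: "\<bar>a \<omega>\<bar> \<le> \<Lambda>" for \<omega> unfolding a_def by (rule l_bound)
  have nZ: "integrable M (\<lambda>\<omega>. norm (Z \<omega>))"
    by (rule square_integrable_imp_integrable) (use moment in auto)
  have aZ: "integrable M (\<lambda>\<omega>. a \<omega> * Z \<omega> $ i)" for i
  proof (rule Bochner_Integration.integrable_bound)
    show "integrable M (\<lambda>\<omega>. \<Lambda> * norm (Z \<omega>))" using nZ by simp
    show "(\<lambda>\<omega>. a \<omega> * Z \<omega> $ i) \<in> borel_measurable M" by measurable
    have "norm (a \<omega> * Z \<omega> $ i) \<le> norm (\<Lambda> * norm (Z \<omega>))" for \<omega>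
    proof -
      have "norm (a \<omega> * Z \<omega> $ i) = \<bar>a \<omega>\<bar> * \<bar>Z \<omega> $ i\<bar>" by (simp add: abs_mult)
      also have "\<dots> \<le> \<Lambda> * norm (Z \<omega>)"
        using L0 by (intro mult_mono abnd) (auto simp: component_le_norm_cart)
      finally show ?thesis using L0 by simp
    qed
    then show "AE \<omega> in M. norm (a \<omega> * Z \<omega> $ i) \<le> norm (\<Lambda> * norm (Z \<omega>))" by simp
  qed
  have ZZ: "integrable M (\<lambda>\<omega>. Z \<omega> $ i * Z \<omega> $ j)" for i j
  proof (rule Bochner_Integration.integrable_bound[OF moment])
    show "(\<lambda>\<omega>. Z \<omega> $ i * Z \<omega> $ j) \<in> borel_measurable M" by measurable
    show "AE \<omega> in M. norm (Z \<omega> $ i * Z \<omega> $ j) \<le> norm ((norm (Z \<omega>))^2)"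
      by (intro AE_I2) (auto simp: abs_mult power2_eq_square intro!: mult_mono component_le_norm_cart)
  qed
  define X where "X \<omega> = a \<omega> * (Z \<omega> \<bullet> w)" for \<omega>
  have Xsum: "X \<omega> = (\<Sum>i\<in>UNIV. w $ i * (a \<omega> * Z \<omega> $ i))" for \<omega>
    by (simp add: X_def inner_vec_def sum_distrib_left mult_ac)
  have intX: "integrable M X" unfolding Xsum using aZ by auto
  have ww: "(norm w)^2 = integral\<^sup>L M X"
  proof -
    have "(norm w)^2 = w \<bullet> w" by (simp add: power2_norm_eq_inner)
    also have "\<dots> = (\<Sum>i\<in>UNIV. w $ i * integral\<^sup>L M (\<lambda>\<omega>. a \<omega> * Z \<omega> $ i))"
      by (simp add: inner_vec_def w_def)
    also have "\<dots> = integral\<^sup>L M X"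
      unfolding Xsum using aZ by (simp add: integral_sum)
    finally show ?thesis .
  qed
  define Q where "Q \<omega> = (\<Sum>i\<in>UNIV. \<Sum>j\<in>UNIV. w$i * w$j * (Z \<omega> $ i * Z \<omega> $ j))" for \<omega>
  have Qeq: "Q \<omega> = (Z \<omega> \<bullet> w)^2" for \<omega>
    by (simp add: Q_def inner_vec_def power2_eq_square sum_product mult_ac)
  have intQ: "integrable M Q" unfolding Q_def using ZZ by auto
  have intQ': "integral\<^sup>L M Q = (\<chi> i j. w $ i * w $ j) \<bullet> S"
    unfolding Q_def using ZZ
    by (simp add: integral_sum inner_vec_def S_def second_moment_def sum_distrib_left mult_ac)
  have X2: "X \<omega> ^2 \<le> \<Lambda>^2 * Q \<omega>" for \<omega>
  proof -
    have "X \<omega> ^2 = (a \<omega>)^2 * Q \<omega>" by (simp add: X_def Qeq power_mult_distrib)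
    also have "\<dots> \<le> \<Lambda>^2 * Q \<omega>"
      using abnd[of \<omega>] L0 by (intro mult_right_mono) (auto simp: Qeq abs_le_square_iff[symmetric] intro: power_mono)
    finally show ?thesis .
  qed
  have intX2: "integrable M (\<lambda>\<omega>. X \<omega> ^2)"
  proof (rule Bochner_Integration.integrable_bound)
    show "integrable M (\<lambda>\<omega>. \<Lambda>^2 * Q \<omega>)" using intQ by simp
    show "(\<lambda>\<omega>. X \<omega> ^2) \<in> borel_measurable M" using intX by auto
    show "AE \<omega> in M. norm (X \<omega> ^2) \<le> norm (\<Lambda>^2 * Q \<omega>)"
      using X2 by (intro AE_I2) (simp add: Qeq)
  qed
  have "(integral\<^sup>L M X)^2 \<le> integral\<^sup>L M (\<lambda>\<omega>. X \<omega> ^2)"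
    using variance_eq[OF intX intX2] variance_positive[of X] by simp
  also have "\<dots> \<le> integral\<^sup>L M (\<lambda>\<omega>. \<Lambda>^2 * Q \<omega>)"
    using intX2 intQ X2 by (intro integral_mono) auto
  also have "\<dots> = \<Lambda>^2 * ((\<chi> i j. w $ i * w $ j) \<bullet> S)" using intQ' by simp
  also have "\<dots> \<le> \<Lambda>^2 * ((norm w)^2 * norm S)"
    using norm_cauchy_schwarz[of "\<chi> i j. w $ i * w $ j" S] norm_outer[of w]
    by (intro mult_left_mono) auto
  finally have "((norm w)^2)^2 \<le> \<Lambda>^2 * norm S * (norm w)^2"
    unfolding ww by (simp add: mult_ac)
  hence "(norm w)^2 \<le> \<Lambda>^2 * norm S"
    by (cases "norm w = 0") (auto simp: power2_eq_square)
  then show ?thesis by (simp add: w_def a_def S_def)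
qed

theorem lemma5:
  fixes M :: "'a measure" and MY :: "'y measure"
    and l :: "'y \<Rightarrow> real \<Rightarrow> real" and \<Lambda> :: real
    and Y Y' :: "'a \<Rightarrow> 'y" and Z Z' :: "'a \<Rightarrow> real^'n"
    and x x' :: "real^'n"
  assumes "prob_space M"
    and l_meas: "(\<lambda>(y, s). l y s) \<in> borel_measurable (MY \<Otimes>\<^sub>M borel)"
    and l_diff: "\<And>y s. l y differentiable (at s)"
    and l_bound: "\<And>y s. \<bar>deriv (l y) s\<bar> \<le> \<Lambda>"
    and meas1: "(\<lambda>\<omega>. (Y \<omega>, Z \<omega>)) \<in> measurable M (MY \<Otimes>\<^sub>M borel)"
    and meas2: "(\<lambda>\<omega>. (Y' \<omega>, Z' \<omega>)) \<in> measurable M (MY \<Otimes>\<^sub>M borel)"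
    and indep: "prob_space.indep_var M (MY \<Otimes>\<^sub>M borel) (\<lambda>\<omega>. (Y \<omega>, Z \<omega>))
                                       (MY \<Otimes>\<^sub>M borel) (\<lambda>\<omega>. (Y' \<omega>, Z' \<omega>))"
    and ident: "distr M (MY \<Otimes>\<^sub>M borel) (\<lambda>\<omega>. (Y \<omega>, Z \<omega>))
              = distr M (MY \<Otimes>\<^sub>M borel) (\<lambda>\<omega>. (Y' \<omega>, Z' \<omega>))"
    and moment: "integrable M (\<lambda>\<omega>. (norm (Z \<omega>))^2)"
  shows "integral\<^sup>L M (\<lambda>\<omega>.
            (deriv (l (Y \<omega>)) (Z \<omega> \<bullet> x) *\<^sub>R Z \<omega>) \<bullet>
            (deriv (l (Y' \<omega>)) (Z' \<omega> \<bullet> x') *\<^sub>R Z' \<omega>))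
         \<le> \<Lambda>^2 * frobenius_norm (second_moment M Z)"
proof -
  interpret prob_space M by fact
  have dm: "(\<lambda>p. deriv (l (fst p)) (snd p)) \<in> borel_measurable (MY \<Otimes>\<^sub>M borel)"
    by (rule deriv_meas[OF l_meas l_diff])
  define h where "h v i (p :: 'y \<times> (real^'n)) = deriv (l (fst p)) (snd p \<bullet> (v::real^'n)) * snd p $ i" for v i p
  have hm: "h v i \<in> borel_measurable (MY \<Otimes>\<^sub>M borel)" for v i
  proof -
    have pm: "(\<lambda>p. (fst p, snd p \<bullet> v)) \<in> measurable (MY \<Otimes>\<^sub>M borel) (MY \<Otimes>\<^sub>M borel)"
      by measurable
    have 1: "(\<lambda>p. deriv (l (fst p)) (snd p \<bullet> v)) \<in> borel_measurable (MY \<Otimes>\<^sub>M borel)"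
      using measurable_compose[OF pm dm] by simp
    have 2: "(\<lambda>p. snd p $ i) \<in> borel_measurable (MY \<Otimes>\<^sub>M borel)"
      by (rule borel_measurable_continuous_on[OF _ measurable_snd]) (intro continuous_intros)
    show ?thesis unfolding h_def[abs_def] using 1 2 by (intro borel_measurable_times)
  qed
  have L0: "0 \<le> \<Lambda>" using l_bound[of undefined 0] by linarith
  have Zm: "Z \<in> borel_measurable M"
    using meas1 by (auto simp: measurable_pair_iff o_def)
  have nZ: "integrable M (\<lambda>\<omega>. norm (Z \<omega>))"
    by (rule square_integrable_imp_integrable) (use moment Zm in auto)
  have intF: "integrable M (\<lambda>\<omega>. h v i (Y \<omega>, Z \<omega>))" for v i
  proof (rule Bochner_Integration.integrable_bound)
    show "integrable M (\<lambda>\<omega>. \<Lambda> * norm (Z \<omega>))" using nZ by simp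
    show "(\<lambda>\<omega>. h v i (Y \<omega>, Z \<omega>)) \<in> borel_measurable M"
      using measurable_compose[OF meas1 hm] by simp
    have "norm (h v i (Y \<omega>, Z \<omega>)) \<le> norm (\<Lambda> * norm (Z \<omega>))" for \<omega>
    proof -
      have "norm (h v i (Y \<omega>, Z \<omega>)) = \<bar>deriv (l (Y \<omega>)) (Z \<omega> \<bullet> v)\<bar> * \<bar>Z \<omega> $ i\<bar>"
        by (simp add: abs_mult h_def)
      also have "\<dots> \<le> \<Lambda> * norm (Z \<omega>)"
        using L0 by (intro mult_mono l_bound) (auto simp: component_le_norm_cart)
      finally show ?thesis using L0 by simp
    qed
    then show "AE \<omega> in M. norm (h v i (Y \<omega>, Z \<omega>)) \<le> norm (\<Lambda> * norm (Z \<omega>))" by simp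
  qed
  have transI: "integrable M (\<lambda>\<omega>. h v i (Y' \<omega>, Z' \<omega>))" for v i
    using intF[of v i] integrable_distr_eq[OF meas2 hm] integrable_distr_eq[OF meas1 hm] ident
    by simp
  have transE: "integral\<^sup>L M (\<lambda>\<omega>. h v i (Y' \<omega>, Z' \<omega>)) = integral\<^sup>L M (\<lambda>\<omega>. h v i (Y \<omega>, Z \<omega>))" for v i
    using integral_distr[OF meas2 hm] integral_distr[OF meas1 hm] ident by simp
  have ind: "indep_var borel (\<lambda>\<omega>. h x i (Y \<omega>, Z \<omega>)) borel (\<lambda>\<omega>. h x' i (Y' \<omega>, Z' \<omega>))" for i
    using indep_var_compose[OF indep hm hm] by (simp add: comp_def)
  define u where "u v = (\<chi> i. integral\<^sup>L M (\<lambda>\<omega>. h v i (Y \<omega>, Z \<omega>)))" for v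
  have eq: "(\<lambda>\<omega>. (deriv (l (Y \<omega>)) (Z \<omega> \<bullet> x) *\<^sub>R Z \<omega>) \<bullet>
            (deriv (l (Y' \<omega>)) (Z' \<omega> \<bullet> x') *\<^sub>R Z' \<omega>))
      = (\<lambda>\<omega>. \<Sum>i\<in>UNIV. h x i (Y \<omega>, Z \<omega>) * h x' i (Y' \<omega>, Z' \<omega>))"
    by (simp add: h_def inner_vec_def mult_ac)
  have "integral\<^sup>L M (\<lambda>\<omega>. \<Sum>i\<in>UNIV. h x i (Y \<omega>, Z \<omega>) * h x' i (Y' \<omega>, Z' \<omega>))
      = (\<Sum>i\<in>UNIV. integral\<^sup>L M (\<lambda>\<omega>. h x i (Y \<omega>, Z \<omega>) * h x' i (Y' \<omega>, Z' \<omega>)))"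
    using indep_var_integrable[OF ind intF transI] by (simp add: integral_sum)
  also have "\<dots> = u x \<bullet> u x'"
    using indep_var_lebesgue_integral[OF ind intF transI] transE
    by (simp add: u_def inner_vec_def)
  also have "\<dots> \<le> norm (u x) * norm (u x')" by (rule norm_cauchy_schwarz)
  also have "\<dots> \<le> sqrt (\<Lambda>^2 * norm (second_moment M Z)) * sqrt (\<Lambda>^2 * norm (second_moment M Z))"
  proof -
    have b: "norm (u v) \<le> sqrt (\<Lambda>^2 * norm (second_moment M Z))" for v
    proof -
      have "(norm (u v))^2 \<le> \<Lambda>^2 * norm (second_moment M Z)"
        using ubound[OF \<open>prob_space M\<close> dm l_bound meas1 moment, of v]
        by (simp add: u_def h_def)
      then show ?thesis using real_le_rsqrt by blast
    qed
    show ?thesis by (intro mult_mono b) auto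
  qed
  also have "\<dots> = \<Lambda>^2 * frobenius_norm (second_moment M Z)"
    by (simp add: frob_norm)
  finally show ?thesis unfolding eq .
qed

end
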